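(* Let $n \ge 2$ be an integer. For each $j \in \{1,\dots,n\}$ let $k_j, p_j, q_j, v_j$ be four distinct prime numbers with $k_j, p_j, q_j > v_j$; let $y_j$ be an integer with $1 \le y_j < v_j$, and let $y_j^{-1}$ denote the integer with $1 \le y_j^{-1} < v_j$ and $y_j \cdot y_j^{-1} \equiv 1 \pmod{v_j}$. Define $$N_j = k_j p_j,\qquad e_j = k_j q_j + y_j^{-1},\qquad d_j = v_j^{k_j} \bmod N_j,$$ and assume that $N_1,\dots,N_n$ are pairwise relatively prime. Let $f_j, t_j, r_j$ be positive integers and define $$N'_j = N_j f_j + d_j t_j,\qquad X=\prod_{l=1}^n N_l,$$ let $A_j$ be an integer with $A_j\cdot \frac{X}{N_j} \equiv 1 \pmod{N_j}$, and set $$AX_j = A_j \cdot \frac{X}{N_j},\qquad e'_j = e_j + N'_j r_j,\qquad S_j = e'_j \cdot AX_j .$$ Let $m_1,\dots,m_n$ be nonnegative integers and let $$C = \Big(\sum_{j=1}^n m_j S_j\Big) \bmod X .$$ Fix $i \in \{1,\dots,n\}$ and suppose that $m_i < v_i$ and $$m_i < \frac{k_i}{y_i^{-1} + v_i\, t_i\, r_i}.$$ Then $$\big((C \bmod k_i)\cdot y_i\big) \bmod v_i = m_i .$$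
   Context: This is the correctness (validation) of the AMOUN multi-recipient encryption scheme: recipient $i$ has private key $(k_i, v_i, y_i)$ and public key $(N_i, e_i, d_i)$; the sender, using the public keys of all $n$ recipients and random integers $f_j,t_j$ (initialization) and random coins $r_j$ (encryption), forms a single ciphertext $C$ encoding the message vector $(m_1,\dots,m_n)$; recipient $i$ decrypts by computing $((C \bmod k_i)\cdot y_i) \bmod v_i$. Here $a \bmod b$ denotes the least nonnegative residue of $a$ modulo $b$. *)

theory Defs
  imports "HOL-Number_Theory.Number_Theory"
begin

end

theory Submission
  imports Defs
begin

lemma fermat_int:
  fixes k v :: int
  assumes "prime k" "0 < v" "v < k"
  shows "[v ^ nat k = v] (mod k)"
proof -
  define K where "K = nat k"
  define V where "V = nat v"
  have kK: "k = int K" and vV: "v = int V" using assms prime_gt_0_int[of k] by (auto simp: K_def V_def)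
  have pK: "prime K" using assms(1) kK by simp
  have nd: "\<not> K dvd V" proof assume "K dvd V" then have "K \<le> V" using assms vV by (intro dvd_imp_le) auto then show False using assms kK vV by simp qed
  have "[V ^ (K - 1) = 1] (mod K)" using fermat_theorem[OF pK nd] .
  then have "[V ^ (K - 1) * V = 1 * V] (mod K)" by (rule cong_mult) simp
  moreover have "V ^ (K - 1) * V = V ^ K" using prime_gt_0_nat[OF pK]
    by (metis Suc_diff_1 mult.commute power_Suc)
  ultimately have "[V ^ K = V] (mod K)" by simp
  then have "[int (V ^ K) = int V] (mod int K)" using cong_int_iff by blast
  then have "[int V ^ K = int V] (mod int K)" by (simp only: of_nat_power)
  moreover have "nat k = K" by (simp add: K_def)
  ultimately show ?thesis using kK vV by simp
qed

theorem mainTheorem1: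
  fixes n :: nat and i :: nat
    and k p q v y yinv N e d f t r N' A AX e' S m :: "nat \<Rightarrow> int"
    and X C :: int
  assumes hn: "n \<ge> 2"
    and hprime: "\<forall>j\<in>{1..n}. prime (k j) \<and> prime (p j) \<and> prime (q j) \<and> prime (v j)"
    and hdistinct: "\<forall>j\<in>{1..n}. distinct [k j, p j, q j, v j]"
    and hgt: "\<forall>j\<in>{1..n}. k j > v j \<and> p j > v j \<and> q j > v j"
    and hy: "\<forall>j\<in>{1..n}. 1 \<le> y j \<and> y j < v j"
    and hyinv: "\<forall>j\<in>{1..n}. 1 \<le> yinv j \<and> yinv j < v j \<and> [y j * yinv j = 1] (mod v j)"
    and hN: "\<forall>j\<in>{1..n}. N j = k j * p j"
    and he: "\<forall>j\<in>{1..n}. e j = k j * q j + yinv j"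
    and hd: "\<forall>j\<in>{1..n}. d j = (v j ^ nat (k j)) mod N j"
    and hcop: "\<forall>j\<in>{1..n}. \<forall>l\<in>{1..n}. j \<noteq> l \<longrightarrow> coprime (N j) (N l)"
    and hpos: "\<forall>j\<in>{1..n}. f j > 0 \<and> t j > 0 \<and> r j > 0"
    and hN': "\<forall>j\<in>{1..n}. N' j = N j * f j + d j * t j"
    and hX: "X = (\<Prod>l\<in>{1..n}. N l)"
    and hA: "\<forall>j\<in>{1..n}. [A j * (X div N j) = 1] (mod N j)"
    and hAX: "\<forall>j\<in>{1..n}. AX j = A j * (X div N j)"
    and he': "\<forall>j\<in>{1..n}. e' j = e j + N' j * r j"
    and hS: "\<forall>j\<in>{1..n}. S j = e' j * AX j"
    and hm: "\<forall>j\<in>{1..n}. m j \<ge> 0"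
    and hC: "C = (\<Sum>j\<in>{1..n}. m j * S j) mod X"
    and hi: "i \<in> {1..n}"
    and hmv: "m i < v i"
    and hmk: "real_of_int (m i) < real_of_int (k i) / real_of_int (yinv i + v i * t i * r i)"
  shows "((C mod k i) * y i) mod v i = m i"
proof -
  let ?I = "{1..n}"
  have fin: "finite ?I" by simp
  have Nnz: "N j \<noteq> 0" if "j \<in> ?I" for j
    using hN hprime that by (metis mult_eq_0_iff not_prime_0)
  have Xsplit: "X = N j * (\<Prod>l\<in>?I - {j}. N l)" if "j \<in> ?I" for j
    using hX prod.remove[OF fin that, of N] by simp
  have Xdiv: "X div N j = (\<Prod>l\<in>?I - {j}. N l)" if "j \<in> ?I" for j
    using Xsplit[OF that] Nnz[OF that] by simp
  have kN: "k i dvd N i" using hN hi by simp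
  have kX: "k i dvd X" using Xsplit[OF hi] kN by simp
  have kSj: "k i dvd m j * S j" if "j \<in> ?I" "j \<noteq> i" for j
  proof -
    have "i \<in> ?I - {j}" using hi that by simp
    then have "N i dvd (\<Prod>l\<in>?I - {j}. N l)" by (intro dvd_prodI) auto
    then have "k i dvd X div N j" using kN Xdiv[OF that(1)] by (metis dvd_trans)
    then show ?thesis using hS hAX that(1) by simp
  qed
  have AXi: "[AX i = 1] (mod k i)"
    using hA hAX hi kN cong_dvd_modulus by metis
  have kp: "prime (k i)" and vp: "prime (v i)" using hprime hi by auto
  have v0: "0 < v i" using vp prime_gt_0_int by blast
  have vk: "v i < k i" using hgt hi by auto
  have dcong: "[d i = v i] (mod k i)"
  proof -
    have "[d i = v i ^ nat (k i)] (mod k i)"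
      using hd hi kN by (metis cong_dvd_modulus cong_mod_left cong_refl)
    also have "[v i ^ nat (k i) = v i] (mod k i)" using fermat_int[OF kp v0 vk] .
    finally show ?thesis .
  qed
  define D where "D = yinv i + v i * t i * r i"
  have e'eq: "e' i = k i * q i + yinv i + (k i * p i * f i + d i * t i) * r i"
    using he' he hN' hN hi by simp
  have e'cong: "[e' i = D] (mod k i)"
  proof -
    have "[k i * q i + yinv i + (k i * p i * f i + d i * t i) * r i
          = 0 * q i + yinv i + (0 * p i * f i + v i * t i) * r i] (mod k i)"
      by (intro cong_add cong_mult cong_refl dcong) (simp_all add: cong_0_iff)
    then show ?thesis using e'eq D_def by (simp add: algebra_simps)
  qed
  have sumsplit: "(\<Sum>j\<in>?I. m j * S j) = m i * S i + (\<Sum>j\<in>?I - {i}. m j * S j)"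
    using sum.remove[OF fin hi] by simp
  have rest: "k i dvd (\<Sum>j\<in>?I - {i}. m j * S j)"
  proof (rule dvd_sum)
    fix j assume "j \<in> ?I - {i}"
    then show "k i dvd m j * S j" using kSj[of j] by blast
  qed
  have Si: "[m i * S i = m i * D] (mod k i)"
  proof -
    have "[m i * (e' i * AX i) = m i * (D * 1)] (mod k i)"
      by (intro cong_mult cong_refl e'cong AXi)
    then show ?thesis using hS hi by simp
  qed
  have sumcong: "[(\<Sum>j\<in>?I. m j * S j) = m i * D] (mod k i)"
  proof -
    have "[m i * S i + (\<Sum>j\<in>?I - {i}. m j * S j) = m i * D + 0] (mod k i)"
      by (intro cong_add Si) (unfold cong_0_iff, rule rest)
    then show ?thesis using sumsplit by simp
  qed
  have c1: "[C = (\<Sum>j\<in>?I. m j * S j)] (mod X)" unfolding hC cong_def by simp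
  have c2: "[C = (\<Sum>j\<in>?I. m j * S j)] (mod k i)" using cong_dvd_modulus[OF c1 kX] .
  have Ccong: "[C = m i * D] (mod k i)" using cong_trans[OF c2 sumcong] .
  have yinv1: "yinv i \<ge> 1" using hyinv hi by blast
  have tr: "t i > 0" "r i > 0" using hpos hi by blast+
  have vtr: "v i * t i * r i > 0" using v0 tr by simp
  have Dpos: "D > 0" unfolding D_def using yinv1 vtr by linarith
  have rD: "real_of_int D > 0" using Dpos by simp
  have mD: "m i * D < k i"
  proof -
    have "real_of_int (m i) < real_of_int (k i) / real_of_int D" using hmk unfolding D_def .
    then have "real_of_int (m i) * real_of_int D < real_of_int (k i)"
      by (simp only: pos_less_divide_eq[OF rD])
    then have "real_of_int (m i * D) < real_of_int (k i)" by (simp only: of_int_mult)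
    then show ?thesis by (simp only: of_int_less_iff)
  qed
  have m0: "m i \<ge> 0" using hm hi by blast
  have mD0: "0 \<le> m i * D" using m0 Dpos by simp
  have Cmod: "C mod k i = m i * D"
  proof -
    have "C mod k i = (m i * D) mod k i" using Ccong unfolding cong_def .
    also have "\<dots> = m i * D" by (rule mod_pos_pos_trivial[OF mD0 mD])
    finally show ?thesis .
  qed
  have eq: "m i * D * y i = m i * (y i * yinv i) + v i * (m i * t i * r i * y i)"
    unfolding D_def by (simp only: algebra_simps)
  have yy: "[y i * yinv i = 1] (mod v i)" using hyinv hi by blast
  have z: "[v i * (m i * t i * r i * y i) = 0] (mod v i)" by (simp add: cong_0_iff)
  have "[m i * (y i * yinv i) + v i * (m i * t i * r i * y i) = m i * 1 + 0] (mod v i)"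
    by (intro cong_add cong_mult cong_refl yy z)
  then have "[m i * D * y i = m i] (mod v i)" unfolding eq by simp
  then have "(m i * D * y i) mod v i = m i mod v i" unfolding cong_def .
  also have "\<dots> = m i" by (rule mod_pos_pos_trivial[OF m0 hmv])
  finally show ?thesis unfolding Cmod .
qed

end
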